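(* Let $\mathcal{H}$ be a class of functions $\mathcal{X}\to\{-1,+1\}$ with VC dimension $d\ge1$. For $h_1,h_2\in\mathcal{H}$ define $f[h_1,h_2]:\mathcal{X}\times\{-1,+1\}\to\{0,1\}$ by $f[h_1,h_2](x,y)=\mathbb{I}[h_1(x)=y\text{ or }h_2(x)=1]$. Then the VC dimension of $\mathcal{F}=\{f[h_1,h_2]:h_1,h_2\in\mathcal{H}\}$ is at most $10d$. *)

theory Defs
  imports Main "HOL-Library.Extended_Nat"
begin

definition shatters :: "('a \<Rightarrow> 'b) set \<Rightarrow> 'b set \<Rightarrow> 'a set \<Rightarrow> bool" where
  "shatters C V S \<longleftrightarrow>
     (\<forall>g. (\<forall>x\<in>S. g x \<in> V) \<longrightarrow> (\<exists>c\<in>C. \<forall>x\<in>S. c x = g x))"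

definition vc_dim :: "'a set \<Rightarrow> 'b set \<Rightarrow> ('a \<Rightarrow> 'b) set \<Rightarrow> enat" where
  "vc_dim D V C = Sup {enat (card S) | S. S \<subseteq> D \<and> finite S \<and> shatters C V S}"

definition fpair :: "('a \<Rightarrow> int) \<Rightarrow> ('a \<Rightarrow> int) \<Rightarrow> ('a \<times> int \<Rightarrow> nat)" where
  "fpair h1 h2 = (\<lambda>(x, y). if h1 x = y \<or> h2 x = 1 then 1 else 0)"

end

theory Submission
  imports Defs Complex_Main
begin

definition Sh :: "'a set set \<Rightarrow> 'a set \<Rightarrow> 'a set set" where
  "Sh CC X = {Z. Z \<subseteq> X \<and> (\<forall>Y\<subseteq>Z. \<exists>C\<in>CC. C \<inter> Z = Y)}"

lemma Sh_sub: "Sh CC X \<subseteq> Pow X" by (auto simp: Sh_def)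

lemma Sh_mono: "CC \<subseteq> DD \<Longrightarrow> Sh CC X \<subseteq> Sh DD X"
  unfolding Sh_def by blast

lemma pajor:
  assumes "finite X" "CC \<subseteq> Pow X"
  shows "card CC \<le> card (Sh CC X)"
  using assms
proof (induction X arbitrary: CC rule: finite_induct)
  case empty
  then have sub: "CC \<subseteq> {{}}" by auto
  show ?case
  proof (cases "CC = {}")
    case True then show ?thesis by simp
  next
    case False
    then have e: "CC = {{}}" using sub by blast
    then have "Sh CC {} = {{}}" by (auto simp: Sh_def)
    then show ?thesis using e by simp
  qed
next
  case (insert x X)
  define Ca where "Ca = {C\<in>CC. x \<notin> C}"
  define Cb where "Cb = {C\<in>CC. x \<in> C}"
  define R where "R = (\<lambda>C. C - {x}) ` Cb"
  define C1 where "C1 = Ca \<union> R"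
  define C2 where "C2 = Ca \<inter> R"
  have finCC: "finite CC" using insert.prems insert.hyps(1)
    by (meson finite_Pow_iff finite_insert finite_subset)
  have finCa: "finite Ca" "finite Cb" using finCC by (auto simp: Ca_def Cb_def)
  have finR: "finite R" using finCa by (simp add: R_def)
  have C1sub: "C1 \<subseteq> Pow X" using insert.prems by (auto simp: C1_def Ca_def R_def Cb_def)
  have C2sub: "C2 \<subseteq> Pow X" using C1sub by (auto simp: C1_def C2_def)
  have "inj_on (\<lambda>C. C - {x}) Cb" unfolding inj_on_def Cb_def by blast
  then have cR: "card R = card Cb" by (simp add: R_def card_image)
  have "CC = Ca \<union> Cb" "Ca \<inter> Cb = {}" by (auto simp: Ca_def Cb_def)
  then have cCC: "card CC = card Ca + card Cb" using finCa by (simp add: card_Un_disjoint)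
  have cC12: "card C1 + card C2 = card Ca + card R"
    unfolding C1_def C2_def using card_Un_Int[OF finCa(1) finR] by simp
  have IH1: "card C1 \<le> card (Sh C1 X)" using insert.IH C1sub by blast
  have IH2: "card C2 \<le> card (Sh C2 X)" using insert.IH C2sub by blast
  have sub1: "Sh C1 X \<union> Sh C2 X \<subseteq> Sh CC (insert x X)"
  proof
    fix Z assume "Z \<in> Sh C1 X \<union> Sh C2 X"
    moreover have "Sh C2 X \<subseteq> Sh C1 X" by (rule Sh_mono) (auto simp: C1_def C2_def)
    ultimately have "Z \<in> Sh C1 X" by blast
    then have Z: "Z \<subseteq> X" and sh: "\<And>Y. Y \<subseteq> Z \<Longrightarrow> \<exists>C\<in>C1. C \<inter> Z = Y"
      unfolding Sh_def by blast+
    have xZ: "x \<notin> Z" using Z insert.hyps(2) by blast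
    have "\<exists>C\<in>CC. C \<inter> Z = Y" if Yz: "Y \<subseteq> Z" for Y
    proof -
      obtain C where C: "C \<in> C1" "C \<inter> Z = Y" using sh[OF Yz] by blast
      show ?thesis
      proof (cases "C \<in> Ca")
        case True then show ?thesis using C by (auto simp: Ca_def)
      next
        case False
        then obtain D where "D \<in> CC" "C = D - {x}" using C by (auto simp: C1_def R_def Cb_def)
        then show ?thesis using C xZ by blast
      qed
    qed
    then show "Z \<in> Sh CC (insert x X)" using Z by (auto simp: Sh_def)
  qed
  have sub2: "insert x ` (Sh C1 X \<inter> Sh C2 X) \<subseteq> Sh CC (insert x X)"
  proof
    fix W assume "W \<in> insert x ` (Sh C1 X \<inter> Sh C2 X)"
    then obtain Z where W: "W = insert x Z" and Z: "Z \<subseteq> X" and sh: "\<forall>Y\<subseteq>Z. \<exists>C\<in>C2. C \<inter> Z = Y"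
      by (auto simp: Sh_def)
    have xZ: "x \<notin> Z" using Z insert.hyps(2) by blast
    have "\<exists>C\<in>CC. C \<inter> W = Y" if Y: "Y \<subseteq> W" for Y
    proof (cases "x \<in> Y")
      case True
      then have "Y - {x} \<subseteq> Z" using Y W by blast
      then obtain C where C: "C \<in> C2" "C \<inter> Z = Y - {x}" using sh by blast
      then obtain D where D: "D \<in> CC" "x \<in> D" "C = D - {x}" by (auto simp: C2_def R_def Cb_def)
      have "D \<inter> W = Y" using D C W True xZ by blast
      then show ?thesis using D by blast
    next
      case False
      then have "Y \<subseteq> Z" using Y W by blast
      then obtain C where C: "C \<in> C2" "C \<inter> Z = Y" using sh by blast
      then have "C \<in> CC" "x \<notin> C" by (auto simp: C2_def Ca_def)
      then show ?thesis using C W by blast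
    qed
    then show "W \<in> Sh CC (insert x X)" using W Z by (auto simp: Sh_def)
  qed
  have disj: "(Sh C1 X \<union> Sh C2 X) \<inter> insert x ` (Sh C1 X \<inter> Sh C2 X) = {}"
    using Sh_sub[of C1 X] Sh_sub[of C2 X] insert.hyps(2) by blast
  have finS: "finite (Sh CC (insert x X))"
    using Sh_sub[of CC "insert x X"] insert.hyps(1) finite_subset by blast
  have finA: "finite (Sh C1 X)" "finite (Sh C2 X)"
    using Sh_sub[of C1 X] Sh_sub[of C2 X] insert.hyps(1) finite_subset by blast+
  have "inj_on (insert x) (Sh C1 X \<inter> Sh C2 X)"
  proof (rule inj_onI)
    fix A B assume "A \<in> Sh C1 X \<inter> Sh C2 X" "B \<in> Sh C1 X \<inter> Sh C2 X" "insert x A = insert x B"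
    moreover have "x \<notin> A" "x \<notin> B" using calculation Sh_sub[of C1 X] insert.hyps(2) by blast+
    ultimately show "A = B" by (metis Diff_insert_absorb)
  qed
  then have ci: "card (insert x ` (Sh C1 X \<inter> Sh C2 X)) = card (Sh C1 X \<inter> Sh C2 X)"
    by (rule card_image)
  have "card ((Sh C1 X \<union> Sh C2 X) \<union> insert x ` (Sh C1 X \<inter> Sh C2 X)) \<le> card (Sh CC (insert x X))"
    using sub1 sub2 finS by (intro card_mono) auto
  moreover have "card ((Sh C1 X \<union> Sh C2 X) \<union> insert x ` (Sh C1 X \<inter> Sh C2 X))
     = card (Sh C1 X \<union> Sh C2 X) + card (Sh C1 X \<inter> Sh C2 X)"
    using disj finA ci by (subst card_Un_disjoint) auto
  moreover have "card (Sh C1 X \<union> Sh C2 X) + card (Sh C1 X \<inter> Sh C2 X) = card (Sh C1 X) + card (Sh C2 X)"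
    using finA by (rule card_Un_Int[symmetric])
  ultimately show ?case using IH1 IH2 cC12 cR cCC by linarith
qed

lemma card_small_subsets:
  assumes "finite X"
  shows "card {Z. Z \<subseteq> X \<and> card Z \<le> d} = (\<Sum>i\<le>d. card X choose i)"
proof -
  have eq: "{Z. Z \<subseteq> X \<and> card Z \<le> d} = (\<Union>i\<in>{..d}. {Z. Z \<subseteq> X \<and> card Z = i})" by auto
  have "card (\<Union>i\<in>{..d}. {Z. Z \<subseteq> X \<and> card Z = i}) = (\<Sum>i\<le>d. card {Z. Z \<subseteq> X \<and> card Z = i})"
    using assms by (intro card_UN_disjoint) (auto intro: finite_subset[of _ "Pow X"])
  then show ?thesis using eq n_subsets[OF assms] by simp
qed

lemma phi_bound:
  assumes "1 \<le> d" "d \<le> n"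
  shows "real (\<Sum>i\<le>d. n choose i) \<le> (real n / d)^d * exp d"
proof -
  define x where "x = real d / n"
  have x0: "0 < x" "x \<le> 1" using assms by (auto simp: x_def)
  have nx: "real n * x = d" using assms by (simp add: x_def)
  have "real (\<Sum>i\<le>d. n choose i) = (\<Sum>i\<le>d. real (n choose i))" by simp
  also have "\<dots> \<le> (\<Sum>i\<le>d. (real n / d)^d * (real (n choose i) * x^i))"
  proof (rule sum_mono)
    fix i assume "i \<in> {..d}"
    then have "x^d \<le> x^i" using x0 by (intro power_decreasing) auto
    then have k: "1 \<le> (real n / d)^d * x^i"
      using x0 assms by (simp add: x_def power_divide field_simps)
    show "real (n choose i) \<le> (real n / d)^d * (real (n choose i) * x^i)"
      using mult_right_mono[OF k, of "real (n choose i)"] by (simp add: algebra_simps)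
  qed
  also have "\<dots> = (real n / d)^d * (\<Sum>i\<le>d. real (n choose i) * x^i)"
    by (simp add: sum_distrib_left)
  also have "(\<Sum>i\<le>d. real (n choose i) * x^i) \<le> (\<Sum>i\<le>n. real (n choose i) * x^i)"
    using assms x0 by (intro sum_mono2) auto
  also have "\<dots> = (x + 1)^n" by (simp add: binomial_ring)
  also have "\<dots> \<le> exp x ^ n" using x0 by (intro power_mono) (auto simp: add.commute)
  also have "\<dots> = exp d" using nx by (simp add: exp_of_nat_mult[symmetric])
  finally show ?thesis using assms by (simp add: mult_left_mono)
qed

lemma final_ineq:
  assumes "2 \<le> d"
  shows "((real (10*d+1) / d)^d * exp d)^2 < 2^(10*d+1)"
proof -
  define a where "a = real (10*d+1) / d"
  have a: "0 \<le> a" "a \<le> 10.5" using assms by (auto simp: a_def field_simps)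
  have e: "0 < exp (1::real)" "exp (1::real) \<le> 3" using exp_le by auto
  have ae: "(a * exp 1)^2 \<le> 992.25"
  proof -
    have "a * exp 1 \<le> 31.5" using a e mult_mono[of a "10.5" "exp 1" 3] by simp
    moreover have "0 \<le> a * exp 1" using a e by simp
    ultimately have "(a * exp 1)^2 \<le> 31.5^2" by (rule power_mono)
    then show ?thesis by (simp add: power2_eq_square)
  qed
  have "exp (real d) = exp 1 ^ d" by (metis exp_of_nat_mult mult.right_neutral)
  then have "(a^d * exp d)^2 = ((a * exp 1)^2)^d"
    by (simp add: power_mult_distrib power_mult[symmetric] mult.commute)
  also have "\<dots> \<le> 992.25 ^ d" using ae by (intro power_mono) auto
  also have "\<dots> < 1024 ^ d" using assms by (intro power_strict_mono) auto
  also have "(1024::real) ^ d = 2^(10*d)" by (simp add: power_mult)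
  also have "\<dots> < 2^(10*d+1)" by simp
  finally show ?thesis by (simp add: a_def)
qed


lemma shatters_subset:
  assumes "shatters C V S" "T \<subseteq> S" "v0 \<in> V"
  shows "shatters C V T"
  unfolding shatters_def
proof (intro allI impI)
  fix g assume g: "\<forall>x\<in>T. g x \<in> V"
  define g' where "g' x = (if x \<in> T then g x else v0)" for x
  have "\<forall>x\<in>S. g' x \<in> V" using g assms(3) by (simp add: g'_def)
  then obtain c where c: "c \<in> C" "\<forall>x\<in>S. c x = g' x" using assms(1) unfolding shatters_def by blast
  have "\<forall>x\<in>T. c x = g x"
  proof
    fix x assume xT: "x \<in> T"
    then have "x \<in> S" using assms(2) by blast
    then show "c x = g x" using c(2) xT by (simp add: g'_def)
  qed
  then show "\<exists>c\<in>C. \<forall>x\<in>T. c x = g x" using c(1) by blast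
qed

lemma core:
  fixes H :: "('a \<Rightarrow> int) set" and d :: nat and S :: "('a \<times> int) set"
  assumes Hval: "\<forall>h\<in>H. \<forall>x. h x \<in> {-1, 1}"
    and Hsh: "\<And>Z. finite Z \<Longrightarrow> shatters H {-1, 1} Z \<Longrightarrow> card Z \<le> d"
    and fin: "finite S" and Ssub: "S \<subseteq> UNIV \<times> {-1, 1}"
    and sh: "shatters {fpair h1 h2 | h1 h2. h1 \<in> H \<and> h2 \<in> H} {0, 1} S"
  shows "2 ^ card S \<le> (\<Sum>i\<le>d. card S choose i) ^ 2"
proof -
  define X0 where "X0 = fst ` S"
  define T where "T h = {x\<in>X0. h x = 1}" for h :: "'a \<Rightarrow> int"
  define TT where "TT = T ` H"
  have finX0: "finite X0" using fin by (simp add: X0_def)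
  have cX0: "card X0 \<le> card S" unfolding X0_def using fin by (rule card_image_le)
  have TTsub: "TT \<subseteq> Pow X0" by (auto simp: TT_def T_def)
  have finTT: "finite TT" using TTsub finX0 finite_subset by blast
  have "Sh TT X0 \<subseteq> {Z. Z \<subseteq> X0 \<and> card Z \<le> d}"
  proof
    fix Z assume Z: "Z \<in> Sh TT X0"
    then have ZX: "Z \<subseteq> X0" and shZ: "\<forall>Y\<subseteq>Z. \<exists>C\<in>TT. C \<inter> Z = Y" by (auto simp: Sh_def)
    have "shatters H {-1, 1} Z"
      unfolding shatters_def
    proof (intro allI impI)
      fix g :: "'a \<Rightarrow> int" assume g: "\<forall>x\<in>Z. g x \<in> {-1, 1}"
      obtain C where "C \<in> TT" "C \<inter> Z = {x\<in>Z. g x = 1}" using shZ by (metis (no_types, lifting) mem_Collect_eq subsetI)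
      then obtain h where h: "h \<in> H" "T h \<inter> Z = {x\<in>Z. g x = 1}" by (auto simp: TT_def)
      have "\<forall>x\<in>Z. h x = g x"
      proof
        fix x assume x: "x \<in> Z"
        then have "h x = 1 \<longleftrightarrow> g x = 1" using h(2) ZX by (auto simp: T_def)
        moreover have "h x \<in> {-1, 1}" using Hval h(1) by blast
        moreover have "g x \<in> {-1, 1}" using g x by blast
        ultimately show "h x = g x" by auto
      qed
      then show "\<exists>c\<in>H. \<forall>x\<in>Z. c x = g x" using h(1) by blast
    qed
    have "finite Z" using finX0 ZX by (rule rev_finite_subset)
    then have "card Z \<le> d" using Hsh \<open>shatters H {-1, 1} Z\<close> by blast
    then show "Z \<in> {Z. Z \<subseteq> X0 \<and> card Z \<le> d}" using ZX by blast
  qed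
  then have "card (Sh TT X0) \<le> card {Z. Z \<subseteq> X0 \<and> card Z \<le> d}"
    using finX0 by (intro card_mono) auto
  also have "\<dots> = (\<Sum>i\<le>d. card X0 choose i)" using finX0 by (rule card_small_subsets)
  also have "\<dots> \<le> (\<Sum>i\<le>d. card S choose i)" using cX0 by (intro sum_mono binomial_right_mono)
  finally have cTT0: "card (Sh TT X0) \<le> (\<Sum>i\<le>d. card S choose i)" .
  have cTT: "card TT \<le> (\<Sum>i\<le>d. card S choose i)"
    using pajor[OF finX0 TTsub] cTT0 by (rule le_trans)
  define G where "G = (\<lambda>(B1, B2). {s\<in>S. (snd s = 1 \<longleftrightarrow> fst s \<in> B1) \<or> fst s \<in> B2})"
  have "Pow S \<subseteq> G ` (TT \<times> TT)"
  proof
    fix A assume A: "A \<in> Pow S"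
    define g where "g s = (if s \<in> A then 1 else 0 :: nat)" for s
    have gv: "\<forall>s\<in>S. g s \<in> {0, 1}" by (simp add: g_def)
    have "(\<forall>s\<in>S. g s \<in> {0, 1}) \<longrightarrow> (\<exists>c\<in>{fpair h1 h2 | h1 h2. h1 \<in> H \<and> h2 \<in> H}. \<forall>s\<in>S. c s = g s)"
      using sh unfolding shatters_def by (rule spec)
    then have "\<exists>c\<in>{fpair h1 h2 | h1 h2. h1 \<in> H \<and> h2 \<in> H}. \<forall>s\<in>S. c s = g s" using gv by (rule mp)
    then obtain c where c: "c \<in> {fpair h1 h2 | h1 h2. h1 \<in> H \<and> h2 \<in> H}" "\<forall>s\<in>S. c s = g s"
      by (rule bexE)
    then obtain h1 h2 where hh: "h1 \<in> H" "h2 \<in> H" "c = fpair h1 h2" by blast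
    have "A = G (T h1, T h2)"
    proof
      show "A \<subseteq> G (T h1, T h2)"
      proof
        fix s assume s: "s \<in> A"
        obtain x y where xy: "s = (x, y)" by fastforce
        have sS: "s \<in> S" using s A by blast
        have xyS: "(x, y) \<in> S" using sS xy by simp
        then have y: "y \<in> {-1, 1}" using Ssub by blast
        have x: "x \<in> X0" unfolding X0_def using xyS by (metis fst_conv image_eqI)
        have "c s = 1" using c(2) sS s by (simp add: g_def)
        then have "h1 x = y \<or> h2 x = 1" using hh(3) xy by (auto simp: fpair_def split: if_splits)
        moreover have "h1 x \<in> {-1, 1}" using Hval hh(1) by blast
        ultimately show "s \<in> G (T h1, T h2)" using sS xy x y by (auto simp: G_def T_def)
      qed
      show "G (T h1, T h2) \<subseteq> A"
      proof
        fix s assume s: "s \<in> G (T h1, T h2)"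
        obtain x y where xy: "s = (x, y)" by fastforce
        have sS: "s \<in> S" using s by (simp add: G_def)
        then have y: "y \<in> {-1, 1}" using Ssub xy by auto
        have xyS: "(x, y) \<in> S" using sS xy by simp
        have x: "x \<in> X0" unfolding X0_def using xyS by (metis fst_conv image_eqI)
        have "(y = 1 \<longleftrightarrow> h1 x = 1) \<or> h2 x = 1" using s xy x by (simp add: G_def T_def)
        moreover have "h1 x \<in> {-1, 1}" using Hval hh(1) by blast
        ultimately have "h1 x = y \<or> h2 x = 1" using y by auto
        then have "c s = 1" using hh(3) xy by (simp add: fpair_def)
        then show "s \<in> A" using c(2) sS by (simp add: g_def split: if_splits)
      qed
    qed
    then show "A \<in> G ` (TT \<times> TT)" using hh by (auto simp: TT_def)
  qed
  then have "card (Pow S) \<le> card (G ` (TT \<times> TT))"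
    using finTT by (intro card_mono) auto
  also have "\<dots> \<le> card (TT \<times> TT)" using finTT by (intro card_image_le) auto
  also have "\<dots> = card TT ^ 2" by (simp add: card_cartesian_product power2_eq_square)
  also have "\<dots> \<le> (\<Sum>i\<le>d. card S choose i) ^ 2" using cTT by (rule power_mono) simp
  finally show ?thesis using fin by (simp add: card_Pow)
qed

theorem lemma6:
  fixes H :: "('a \<Rightarrow> int) set" and d :: nat
  assumes "\<forall>h\<in>H. \<forall>x. h x \<in> {-1, 1}"
    and "vc_dim (UNIV :: 'a set) {-1, 1} H = enat d"
    and "d \<ge> 1"
  shows "vc_dim (UNIV \<times> {-1, 1}) {0, 1} {fpair h1 h2 | h1 h2. h1 \<in> H \<and> h2 \<in> H}
           \<le> enat (10 * d)"
proof -
  have Hsh: "card Z \<le> d" if "finite Z" "shatters H {-1, 1} Z" for Z :: "'a set"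
  proof -
    have "enat (card Z) \<le> vc_dim (UNIV :: 'a set) {-1, 1} H"
      unfolding vc_dim_def using that by (intro Sup_upper) blast
    then show ?thesis using assms(2) by simp
  qed
  show ?thesis
    unfolding vc_dim_def
  proof (rule Sup_least)
    fix e assume "e \<in> {enat (card S) |S. S \<subseteq> UNIV \<times> {-1, 1} \<and> finite S \<and>
         shatters {fpair h1 h2 | h1 h2. h1 \<in> H \<and> h2 \<in> H} {0, 1} S}"
    then obtain S where e: "e = enat (card S)" and S: "S \<subseteq> UNIV \<times> {-1, 1}" "finite S"
      "shatters {fpair h1 h2 | h1 h2. h1 \<in> H \<and> h2 \<in> H} {0, 1} S" by blast
    have "card S \<le> 10 * d"
    proof (rule ccontr)
      assume "\<not> card S \<le> 10 * d"
      then obtain S' where S': "S' \<subseteq> S" "card S' = 10 * d + 1"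
        using obtain_subset_with_card_n[of "10*d+1" S] by auto
      have fS': "finite S'" using S' S(2) finite_subset by blast
      have "shatters {fpair h1 h2 | h1 h2. h1 \<in> H \<and> h2 \<in> H} {0, 1} S'"
        using shatters_subset[OF S(3) S'(1), of 0] by simp
      then have ineq: "2 ^ (10 * d + 1) \<le> (\<Sum>i\<le>d. (10 * d + 1) choose i) ^ 2"
        using core[OF assms(1) Hsh fS'] S S' by auto
      show False
      proof (cases "d = 1")
        case True
        then show False using ineq by (simp add: numeral_eq_Suc)
      next
        case False
        then have d2: "2 \<le> d" using assms(3) by simp
        have "real (\<Sum>i\<le>d. (10 * d + 1) choose i) \<le> (real (10*d+1) / d)^d * exp d"
          using d2 by (intro phi_bound) auto
        then have "real (\<Sum>i\<le>d. (10 * d + 1) choose i) ^ 2 \<le> ((real (10*d+1) / d)^d * exp d)^2"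
          by (rule power_mono) (rule of_nat_0_le_iff)
        also have "\<dots> < 2^(10*d+1)" using d2 by (rule final_ineq)
        finally have "real ((\<Sum>i\<le>d. (10 * d + 1) choose i) ^ 2) < real (2^(10*d+1))" by simp
        then show False using ineq by linarith
      qed
    qed
    then show "e \<le> enat (10 * d)" using e by simp
  qed
qed

end
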